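(* Let $k\ge 100$ be an integer and let $\alpha_1,\ldots,\alpha_k$ be the roots of $f_k(X)=X^k-X^{k-1}-\cdots-X-1$. Then $$|\alpha_i-\alpha_j|>\frac{1}{k^{3/2}\,3^{k/2}}\qquad\text{for all }1\le i<j\le k.$$
   Context: $f_k(X)=X^k-X^{k-1}-\cdots-X-1$; its roots are distinct. *)

theory Defs
  imports "HOL-Analysis.Analysis" "HOL-Computational_Algebra.Polynomial"
begin

definition fk :: "nat \<Rightarrow> complex poly" where
  "fk k = monom 1 k - (\<Sum>i<k. monom 1 i)"

end

theory Submission
  imports Defs
begin

lemma root_eq:
  assumes "poly (fk k) z = 0"
  shows "z^k * (2 - z) = 1"
proof -
  have e: "z^k = (\<Sum>i<k. z^i)" using assms by (simp add: fk_def poly_sum poly_monom)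
  have "1 - z^k = (1 - z) * (\<Sum>i<k. z^i)" by (rule one_diff_power_eq)
  then have "1 - z^k = (1 - z) * z^k" using e by simp
  then show ?thesis by (simp add: algebra_simps)
qed

lemma root_norm_le3:
  assumes "z^k * (2 - z) = (1::complex)" "k \<ge> 1"
  shows "cmod z \<le> 3"
proof (rule ccontr)
  assume "\<not> ?thesis"
  hence h: "cmod z > 3" by simp
  have "cmod (2 - z) \<ge> cmod z - 2" using norm_triangle_ineq2[of z 2] by (simp add: norm_minus_commute)
  hence h2: "cmod (2 - z) > 1" using h by simp
  have "cmod z ^ k \<ge> 1" using h by (simp add: one_le_power)
  hence "1 * cmod (2 - z) \<le> cmod z ^ k * cmod (2 - z)" by (intro mult_right_mono) auto
  hence "cmod z ^ k * cmod (2 - z) > 1" using h2 by linarith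
  moreover have "cmod z ^ k * cmod (2 - z) = 1" using arg_cong[OF assms(1), of cmod] by (simp add: norm_mult norm_power)
  ultimately show False by simp
qed

lemma root_norm_ge:
  assumes "z^k * (2 - z) = (1::complex)" "k \<ge> 2"
  shows "cmod z \<ge> 1/2"
proof (rule ccontr)
  assume "\<not> ?thesis"
  hence h: "cmod z < 1/2" by simp
  have h2: "cmod (2 - z) \<le> 5/2" using norm_triangle_ineq4[of 2 z] h by simp
  have "cmod z ^ k \<le> (1/2)^k" using h by (simp add: power_mono)
  also have "\<dots> \<le> (1/2)^2" using assms(2) by (simp add: power_decreasing)
  finally have "cmod z ^ k * cmod (2 - z) \<le> (1/4) * (5/2)"
    using h2 by (intro mult_mono) (auto simp: power2_eq_square)
  moreover have "cmod z ^ k * cmod (2 - z) = 1" using arg_cong[OF assms(1), of cmod] by (simp add: norm_mult norm_power)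
  ultimately show False by simp
qed

lemma pow32_10: "k \<ge> (10::nat) \<Longrightarrow> (3/2::real)^k \<ge> 2*k+2"
proof (induction k rule: dec_induct)
  case base then show ?case by (simp add: power_divide)
next
  case (step n)
  have "(3/2::real)^Suc n = (3/2) * (3/2)^n" by simp
  also have "\<dots> \<ge> (3/2) * (2*n+2)" using step.IH by simp
  finally show ?case using step.hyps by simp
qed

lemma pow32: "k \<ge> (100::nat) \<Longrightarrow> (3/2::real)^k \<ge> 2*k+2"
  using pow32_10 by simp

lemma pow3_10: "k \<ge> (10::nat) \<Longrightarrow> (3::real)^k \<ge> 1024*k"
proof (induction k rule: dec_induct)
  case base then show ?case by simp
next
  case (step n)
  have "(3::real)^Suc n = 3 * 3^n" by simp
  also have "\<dots> \<ge> 3 * (1024*n)" using step.IH by simp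
  finally show ?case using step.hyps by simp
qed

lemma pow3: "k \<ge> (100::nat) \<Longrightarrow> (3::real)^k \<ge> 1024*k"
  using pow3_10 by simp

lemma key:
  assumes "z^k * (2 - z) = (1::complex)" "k \<ge> 100"
  shows "cmod (of_nat (k+1) * z - of_nat (2*k)) \<ge> 1"
proof (cases "cmod z < 3/2")
  case True
  have "cmod (of_nat (2*k) - of_nat (k+1) * z) \<ge> cmod (of_nat (2*k)::complex) - cmod (of_nat (k+1) * z)"
    by (rule norm_triangle_ineq2)
  moreover have "cmod (of_nat (k+1) * z) \<le> (k+1) * (3/2)"
  proof -
    have "cmod (of_nat (k+1) * z) = real (k+1) * cmod z" by (simp only: norm_mult norm_of_nat)
    also have "\<dots> \<le> (k+1) * (3/2)" using True by (intro mult_left_mono) auto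
    finally show ?thesis .
  qed
  moreover have "cmod (of_nat (2*k)::complex) = 2*k" by (simp only: norm_of_nat)
  ultimately have "cmod (of_nat (2*k) - of_nat (k+1) * z) \<ge> 2*k - (k+1)*(3/2)"
    by linarith
  moreover have "2*real k - (k+1)*(3/2) \<ge> 1"
  proof -
    have "real k \<ge> 100" using assms(2) by simp
    then show ?thesis by (simp add: field_simps)
  qed
  ultimately show ?thesis by (simp only: norm_minus_commute)
next
  case False
  have n1: "cmod z ^ k * cmod (2 - z) = 1" using arg_cong[OF assms(1), of cmod] by (simp add: norm_mult norm_power)
  have "cmod z ^ k \<ge> (3/2)^k" using False by (simp add: power_mono)
  hence "cmod z ^ k \<ge> 2*k+2" using pow32[OF assms(2)] by linarith
  hence "(2*k+2) * cmod (2 - z) \<le> cmod z ^ k * cmod (2 - z)" by (intro mult_right_mono) auto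
  hence "(2*k+2) * cmod (2 - z) \<le> 1" using n1 by linarith
  hence c: "(k+1) * cmod (2 - z) \<le> 1/2" by (simp add: algebra_simps)
  have eq: "of_nat (k+1) * z - of_nat (2*k) = 2 - of_nat (k+1) * (2 - z)" by (simp add: algebra_simps)
  have "cmod (2 - of_nat (k+1) * (2 - z)) \<ge> cmod (2::complex) - cmod (of_nat (k+1) * (2 - z))"
    by (rule norm_triangle_ineq2)
  moreover have "cmod (of_nat (k+1) * (2 - z)) = (k+1) * cmod (2 - z)"
    by (simp only: norm_mult norm_of_nat)
  ultimately show ?thesis using eq c by simp
qed

lemma Dle:
  assumes "k \<ge> (100::nat)"
  shows "1 / (real k powr (3/2) * 3 powr (real k / 2)) \<le> 1/(32 * real k^2)"
proof -
  have kp: "real k > 0" using assms by simp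
  have e1: "real k powr (3/2) = real k * sqrt (real k)"
  proof -
    have "real k powr (3/2) = real k powr (1 + 1/2)" by simp
    also have "\<dots> = real k powr 1 * real k powr (1/2)" by (rule powr_add)
    also have "\<dots> = real k * sqrt (real k)" using kp by (simp add: powr_half_sqrt)
    finally show ?thesis .
  qed
  have e2: "(3::real) powr (real k / 2) = sqrt (3^k)"
    by (simp add: powr_half_sqrt_powr powr_realpow)
  have "sqrt (3^k) \<ge> sqrt (1024 * real k)" using pow3[OF assms] by simp
  moreover have "sqrt (1024 * real k) = 32 * sqrt (real k)"
    by (simp add: real_sqrt_mult)
  ultimately have s: "sqrt (3^k) \<ge> 32 * sqrt (real k)" by simp
  have "real k * sqrt (real k) * sqrt (3^k) \<ge> real k * sqrt (real k) * (32 * sqrt (real k))"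
    using s kp by (intro mult_left_mono) auto
  also have "real k * sqrt (real k) * (32 * sqrt (real k)) = 32 * real k^2"
    using kp by (simp add: power2_eq_square)
  finally have "real k powr (3/2) * 3 powr (real k / 2) \<ge> 32 * real k^2" using e1 e2 by simp
  moreover have "32 * real k^2 > 0" using kp by simp
  ultimately show ?thesis by (intro divide_left_mono) auto
qed

theorem mainTheorem3:
  fixes k :: nat and a b :: complex
  assumes "k \<ge> 100"
    and "poly (fk k) a = 0" and "poly (fk k) b = 0" and "a \<noteq> b"
  shows "cmod (a - b) > 1 / (real k powr (3/2) * 3 powr (real k / 2))"
proof -
  define d where "d = cmod (a - b)"
  have k2: "k \<ge> 2" using assms(1) by simp
  have kp: "real k > 0" using assms(1) by simp
  have ra: "a^k*(2-a) = 1" and rb: "b^k*(2-b) = 1" using root_eq assms(2,3) by auto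
  have a3: "cmod a \<le> 3" using root_norm_le3[OF ra] k2 by simp
  have bge: "cmod b \<ge> 1/2" using root_norm_ge[OF rb k2] .
  have a2: "2 - a \<noteq> 0" using ra by auto
  have b2: "2 - b \<noteq> 0" using rb by auto
  have b0: "b \<noteq> 0" using bge by auto
  have dpos: "d > 0" using assms(4) by (simp add: d_def)
  have main: "d > 1/(32*real k^2)"
  proof (rule ccontr)
    assume "\<not> ?thesis"
    hence dle: "d \<le> 1/(32*real k^2)" by simp
    define r where "r = a/b"
    define u where "u = r - 1"
    have u_eq: "u * b = a - b" using b0 by (simp add: u_def r_def field_simps)
    have nu: "cmod u \<le> 2*d"
    proof -
      have "cmod u * cmod b = d" using arg_cong[OF u_eq, of cmod] by (simp add: norm_mult d_def)
      moreover have "cmod u * (1/2) \<le> cmod u * cmod b" using bge by (intro mult_left_mono) auto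
      ultimately show ?thesis by linarith
    qed
    have ku: "real k * cmod u \<le> 1"
    proof -
      have "real k * cmod u \<le> real k * (2*d)" using nu kp by simp
      also have "\<dots> \<le> real k * (2/(32*real k^2))" using dle kp by (intro mult_left_mono) auto
      also have "\<dots> \<le> 1" using kp assms(1) by (simp add: power2_eq_square field_simps)
      finally show ?thesis .
    qed
    have ak: "a^k = 1/(2-a)" using ra a2 by (simp add: field_simps)
    have bk: "b^k = 1/(2-b)" using rb b2 by (simp add: field_simps)
    have rk: "r^k - 1 = u * b / (2-a)"
    proof -
      have "r^k = a^k / b^k" by (simp add: r_def power_divide)
      also have "\<dots> = (2-b)/(2-a)" unfolding ak bk using a2 b2 by (simp add: divide_simps)
      finally have "r^k - 1 = (2-b)/(2-a) - 1" by simp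
      also have "\<dots> = (a-b)/(2-a)" using a2 by (simp add: field_simps)
      finally show ?thesis using u_eq by simp
    qed
    define S where "S = (\<Sum>i<k. r^i)"
    have "r^k - 1 = u * S" unfolding S_def u_def by (rule power_diff_1_eq)
    moreover have u0: "u \<noteq> 0" using u_eq assms(4) by auto
    ultimately have "u * S = u * (b / (2-a))" using rk by (simp add: field_simps)
    hence Sb: "S = b / (2-a)" using u0 mult_left_cancel by blast
    have rj: "cmod r ^ j \<le> 3" if "j < k" for j
    proof -
      have "cmod r \<le> 1 + cmod u" unfolding u_def using norm_triangle_ineq[of 1 "r - 1"] by simp
      hence "cmod r ^ j \<le> (1 + cmod u)^j" by (simp add: power_mono)
      also have "\<dots> \<le> exp (cmod u) ^ j" by (intro power_mono) auto
      also have "\<dots> = exp (real j * cmod u)" by (simp add: exp_of_nat_mult)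
      also have "\<dots> \<le> exp 1"
      proof -
        have "real j * cmod u \<le> real k * cmod u" using that by (intro mult_right_mono) auto
        then show ?thesis using ku by simp
      qed
      also have "\<dots> \<le> 3" by (rule exp_le)
      finally show ?thesis .
    qed
    have each: "cmod (1 - r^i) \<le> 3 * real k * cmod u" if "i < k" for i
    proof -
      have "1 - r^i = - (u * (\<Sum>j<i. r^j))" unfolding u_def using power_diff_1_eq[of r i] by (metis minus_diff_eq)
      hence "cmod (1 - r^i) = cmod u * cmod (\<Sum>j<i. r^j)" by (simp add: norm_mult)
      moreover have "cmod (\<Sum>j<i. r^j) \<le> 3 * real k"
      proof -
        have "cmod (\<Sum>j<i. r^j) \<le> (\<Sum>j<i. cmod (r^j))" by (rule norm_sum)
        also have "\<dots> \<le> (\<Sum>j<i. (3::real))"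
          using rj that by (intro sum_mono) (simp add: norm_power)
        also have "\<dots> = 3 * real i" by simp
        also have "\<dots> \<le> 3 * real k" using that by simp
        finally show ?thesis .
      qed
      ultimately show ?thesis by (simp add: mult_left_mono mult.commute)
    qed
    have kS: "of_nat k - S = (\<Sum>i<k. 1 - r^i)" by (simp add: S_def sum_subtractf)
    have nkS: "cmod (of_nat k - S) \<le> 3 * real k^2 * cmod u"
    proof -
      have "cmod (of_nat k - S) \<le> (\<Sum>i<k. cmod (1 - r^i))" unfolding kS by (rule norm_sum)
      also have "\<dots> \<le> (\<Sum>i<k. 3 * real k * cmod u)" using each by (intro sum_mono) auto
      also have "\<dots> = 3 * real k^2 * cmod u" by (simp add: power2_eq_square)
      finally show ?thesis .
    qed
    have eq1: "(2 - a) * (of_nat k - S) = of_nat k * (2 - a) - b" using Sb a2 by (simp add: field_simps)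
    have na: "cmod (2 - a) \<le> 5" using norm_triangle_ineq4[of 2 a] a3 by simp
    have up: "cmod (of_nat k * (2 - a) - b) \<le> 30 * real k^2 * d"
    proof -
      have "cmod (of_nat k * (2 - a) - b) = cmod (2 - a) * cmod (of_nat k - S)"
        unfolding eq1[symmetric] by (rule norm_mult)
      also have "\<dots> \<le> 5 * (3 * real k^2 * cmod u)" using na nkS by (intro mult_mono) auto
      also have "\<dots> \<le> 5 * (3 * real k^2 * (2*d))" using nu by (intro mult_left_mono) auto
      finally show ?thesis by simp
    qed
    have eq2: "of_nat k * (2 - a) - b = (a - b) - (of_nat (k+1) * a - of_nat (2*k))" by (simp add: algebra_simps)
    have "cmod (of_nat k * (2 - a) - b) \<ge> cmod (of_nat (k+1) * a - of_nat (2*k)) - cmod (a - b)"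
      unfolding eq2 using norm_triangle_ineq3[of "a - b" "of_nat (k+1) * a - of_nat (2*k)"]
      by (simp add: norm_minus_commute)
    hence lo: "cmod (of_nat k * (2 - a) - b) \<ge> 1 - d" using key[OF ra assms(1)] d_def by linarith
    have k2g: "real k^2 \<ge> 1" using kp assms(1) by (simp add: one_le_power)
    have "d \<le> real k^2 * d" using dpos k2g by (simp add: mult_le_cancel_right1)
    hence "1 \<le> 31 * real k^2 * d" using lo up by linarith
    also have "\<dots> \<le> 31 * real k^2 * (1/(32*real k^2))" using dle kp by (intro mult_left_mono) auto
    also have "\<dots> < 1" using kp by simp
    finally show False by simp
  qed
  show ?thesis using Dle[OF assms(1)] main d_def by linarith
qed

end
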